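(* Let $d\ge1$ and let $x_1,\dots,x_d,y_1,\dots,y_{d+1}$ be real numbers such that the $(d+1)\times(d+1)$ matrix whose $k$-th column $\mathbf{v}_k$ ($1\le k\le d$) has entry $x_k$ in row $k$, entry $y_k$ in row $d+1$ and zeros elsewhere, and whose last column is $\mathbf{v}_{d+1}=(0,\dots,0,y_{d+1})^T$, is nonsingular. Put $K_0=1$ and $K_j=1+\sum_{i=1}^j(y_i/x_i)^2$ for $1\le j\le d$. Let $\mathbf{v}_1^\star,\dots,\mathbf{v}_{d+1}^\star$ be the Gram–Schmidt orthogonalization of $(\mathbf{v}_1,\dots,\mathbf{v}_{d+1})$. Then for $1\le k\le d$ and $1\le i\le d+1$, $$(\mathbf{v}_k^\star)_i=\begin{cases}-\dfrac{y_k}{K_{k-1}}\cdot\dfrac{y_i}{x_i} & i<k,\\ x_k & i=k,\\ 0 & k<i<d+1,\\ \dfrac{y_k}{K_{k-1}} & i=d+1,\end{cases}$$ and $(\mathbf{v}_{d+1}^\star)_i=-\dfrac{y_{d+1}}{K_d}\cdot\dfrac{y_i}{x_i}$ for $i\le d$, $(\mathbf{v}_{d+1}^\star)_{d+1}=\dfrac{y_{d+1}}{K_d}$. Moreover $$\|\mathbf{v}_k^\star\|_2^2=x_k^2\frac{K_k}{K_{k-1}}\ (1\le k\le d),\qquad \|\mathbf{v}_{d+1}^\star\|_2^2=\frac{y_{d+1}^2}{K_d},$$ and the Gram–Schmidt coefficients are $$\mu_{k,j}=\frac{\mathbf{v}_k\cdot\mathbf{v}_j^\star}{\mathbf{v}_j^\star\cdot\mathbf{v}_j^\star}=\frac{y_ky_j}{x_j^2K_j},\qquad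 1\le j<k\le d+1.$$
   Context: $(\mathbf{v})_i$ denotes the $i$-th coordinate, $\|\cdot\|_2$ the Euclidean norm. Gram–Schmidt orthogonalization: $\mathbf{v}_k^\star=\mathbf{v}_k-\sum_{j<k}\mu_{k,j}\mathbf{v}_j^\star$ with $\mu_{k,j}=\frac{\mathbf{v}_k\cdot\mathbf{v}_j^\star}{\mathbf{v}_j^\star\cdot\mathbf{v}_j^\star}$. *)

theory Defs
  imports Complex_Main "Jordan_Normal_Form.Determinant"
begin

text \<open>Vectors of R^(d+1) are represented as functions nat => real, coordinates indexed 1..n.\<close>

definition dotp :: "nat \<Rightarrow> (nat \<Rightarrow> real) \<Rightarrow> (nat \<Rightarrow> real) \<Rightarrow> real" where
  "dotp n u w = (\<Sum>i=1..n. u i * w i)"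

function gso :: "nat \<Rightarrow> (nat \<Rightarrow> nat \<Rightarrow> real) \<Rightarrow> nat \<Rightarrow> (nat \<Rightarrow> real)" where
  "gso n v k = (\<lambda>i. v k i - (\<Sum>j\<in>{1..<k}.
       (dotp n (v k) (gso n v j) / dotp n (gso n v j) (gso n v j)) * gso n v j i))"
  by pat_completeness auto
termination
  by (relation "measure (\<lambda>(n, v, k). k)") auto

definition gs_mu :: "nat \<Rightarrow> (nat \<Rightarrow> nat \<Rightarrow> real) \<Rightarrow> nat \<Rightarrow> nat \<Rightarrow> real" where
  "gs_mu n v k j = dotp n (v k) (gso n v j) / dotp n (gso n v j) (gso n v j)"

definition col :: "nat \<Rightarrow> (nat \<Rightarrow> real) \<Rightarrow> (nat \<Rightarrow> real) \<Rightarrow> nat \<Rightarrow> nat \<Rightarrow> real" where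
  "col d x y k i =
     (if k \<le> d then (if i = k then x k else if i = d + 1 then y k else 0)
      else (if i = d + 1 then y (d + 1) else 0))"

text \<open>The (d+1)x(d+1) matrix with columns v_1..v_{d+1} (Jordan_Normal_Form matrices are 0-indexed).\<close>
definition colmat :: "nat \<Rightarrow> (nat \<Rightarrow> real) \<Rightarrow> (nat \<Rightarrow> real) \<Rightarrow> real mat" where
  "colmat d x y = mat (d + 1) (d + 1) (\<lambda>(r, c). col d x y (c + 1) (r + 1))"

definition Kc :: "(nat \<Rightarrow> real) \<Rightarrow> (nat \<Rightarrow> real) \<Rightarrow> nat \<Rightarrow> real" where
  "Kc x y j = 1 + (\<Sum>i=1..j. (y i / x i)^2)"

end

theory Submission imports Defs begin

lemma xnz:
  assumes "det (colmat d x y) \<noteq> 0" "k \<in> {1..d}"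
  shows "x k \<noteq> 0"
proof
  assume x0: "x k = 0"
  have car: "colmat d x y \<in> carrier_mat (d+1) (d+1)" by (simp add: colmat_def)
  have "det (colmat d x y) = prod_list (diag_mat (colmat d x y))"
    by (rule det_lower_triangular[OF _ car]) (auto simp: colmat_def col_def)
  also have "\<dots> = 0"
  proof -
    have "colmat d x y $$ (k-1,k-1) \<in> set (diag_mat (colmat d x y))"
      unfolding diag_mat_def set_map
      by (rule imageI) (use assms(2) in \<open>auto simp: colmat_def\<close>)
    moreover have "colmat d x y $$ (k-1,k-1) = 0" using assms(2) x0 by (auto simp: colmat_def col_def)
    ultimately show ?thesis by (simp add: prod_list_zero_iff)
  qed
  finally show False using assms(1) by simp
qed


lemma tele: "a \<le> b \<Longrightarrow> (\<Sum>j\<in>{Suc a..<Suc b}. (g (j-1) - g j)) = (g a - g b :: real)"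
proof (induction b)
  case 0 then show ?case by simp
next
  case (Suc b)
  show ?case
  proof (cases "a = Suc b")
    case True then show ?thesis by simp
  next
    case False
    then have "a \<le> b" using Suc.prems by simp
    then have "(\<Sum>j\<in>{Suc a..<Suc (Suc b)}. (g (j-1) - g j)) = (\<Sum>j\<in>{Suc a..<Suc b}. (g (j-1) - g j)) + (g b - g (Suc b))"
      by (simp add: sum.atLeastLessThan_Suc)
    then show ?thesis using Suc.IH[OF \<open>a \<le> b\<close>] by simp
  qed
qed

lemma Kge1: "Kc x y j \<ge> 1"
  unfolding Kc_def by (simp add: sum_nonneg)

lemma Kpos: "Kc x y j > 0"
  using Kge1[of x y j] by simp

lemma K0: "Kc x y 0 = 1" by (simp add: Kc_def)

lemma Ksuc: "j \<ge> 1 \<Longrightarrow> Kc x y j = Kc x y (j-1) + (y j / x j)^2"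
  unfolding Kc_def by (cases j) (auto simp: sum.cl_ivl_Suc)

lemma keyid:
  assumes "x j \<noteq> 0" "j \<ge> 1"
  shows "(y j)^2 / ((x j)^2 * Kc x y j * Kc x y (j-1)) = 1 / Kc x y (j-1) - 1 / Kc x y j"
proof -
  have a: "Kc x y j > 0" "Kc x y (j-1) > 0" by (rule Kpos)+
  have "(y j)^2 / (x j)^2 = Kc x y j - Kc x y (j-1)" using Ksuc[OF assms(2), of x y] assms(1)
    by (simp add: power_divide)
  then have "(y j)^2 = (x j)^2 * (Kc x y j - Kc x y (j-1))" using assms(1) by (simp add: field_simps)
  then show ?thesis using a assms(1) by (simp add: field_simps)
qed

definition G :: "nat \<Rightarrow> (nat \<Rightarrow> real) \<Rightarrow> (nat \<Rightarrow> real) \<Rightarrow> nat \<Rightarrow> nat \<Rightarrow> real" where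
  "G d x y k i = (if k \<le> d then (if i < k then - (y k / Kc x y (k - 1)) * (y i / x i)
               else if i = k then x k
               else if i < d + 1 then 0
               else y k / Kc x y (k - 1))
     else (if i \<le> d then - (y (d+1) / Kc x y d) * (y i / x i) else y (d+1) / Kc x y d))"

lemma dotG:
  assumes "1 \<le> j" "j < k" "k \<le> d+1"
  shows "dotp (d+1) (col d x y k) (G d x y j) = y k * y j / Kc x y (j-1)"
proof -
  have "dotp (d+1) (col d x y k) (G d x y j) = (\<Sum>i=1..d. col d x y k i * G d x y j i) + col d x y k (d+1) * G d x y j (d+1)"
    unfolding dotp_def by (simp add: sum.cl_ivl_Suc)
  also have "(\<Sum>i=1..d. col d x y k i * G d x y j i) = 0"
    by (rule sum.neutral) (use assms in \<open>auto simp: col_def G_def\<close>)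
  finally have e: "dotp (d+1) (col d x y k) (G d x y j) = col d x y k (d+1) * G d x y j (d+1)" by simp
  have "k \<le> d \<or> k = d+1" using assms by auto
  then have c: "col d x y k (d+1) = y k" by (auto simp: col_def)
  have g: "G d x y j (d+1) = y j / Kc x y (j-1)" using assms by (simp add: G_def)
  show ?thesis unfolding e c g by simp
qed

lemma sumsq: "(\<Sum>i\<in>{1..<j}. (y i / x i)^2) = Kc x y (j-1) - 1"
proof (cases j)
  case 0 then show ?thesis by (simp add: Kc_def)
next
  case (Suc m)
  then have "{1..<j} = {1..m}" by auto
  then show ?thesis using Suc by (simp add: Kc_def)
qed

lemma normG1:
  assumes "1 \<le> j" "j \<le> d" "x j \<noteq> 0"
  shows "dotp (d+1) (G d x y j) (G d x y j) = (x j)^2 * (Kc x y j / Kc x y (j-1))"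
proof -
  let ?c = "y j / Kc x y (j-1)"
  have "dotp (d+1) (G d x y j) (G d x y j) = (\<Sum>i=1..d. G d x y j i * G d x y j i) + G d x y j (d+1) * G d x y j (d+1)"
    unfolding dotp_def by (simp add: sum.cl_ivl_Suc)
  also have "(\<Sum>i=1..d. G d x y j i * G d x y j i) = (\<Sum>i\<in>{1..<j}. G d x y j i * G d x y j i) + (\<Sum>i\<in>{j..<Suc d}. G d x y j i * G d x y j i)"
    using assms sum.atLeastLessThan_concat[of 1 j "Suc d" "\<lambda>i. G d x y j i * G d x y j i"]
    by (simp add: atLeastLessThanSuc_atLeastAtMost)
  also have "(\<Sum>i\<in>{j..<Suc d}. G d x y j i * G d x y j i) = (x j)^2 + (\<Sum>i\<in>{Suc j..<Suc d}. G d x y j i * G d x y j i)"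
    using assms by (simp add: sum.atLeast_Suc_lessThan power2_eq_square G_def)
  also have "(\<Sum>i\<in>{Suc j..<Suc d}. G d x y j i * G d x y j i) = 0"
    by (rule sum.neutral) (use assms in \<open>auto simp: G_def\<close>)
  also have "(\<Sum>i\<in>{1..<j}. G d x y j i * G d x y j i) = (\<Sum>i\<in>{1..<j}. ?c^2 * (y i / x i)^2)"
    by (rule sum.cong) (use assms in \<open>auto simp: G_def power2_eq_square mult_ac\<close>)
  also have "\<dots> = ?c^2 * (Kc x y (j-1) - 1)" by (subst sum_distrib_left[symmetric], subst sumsq, rule refl)
  also have "G d x y j (d+1) = ?c" using assms by (simp add: G_def)
  finally have e: "dotp (d+1) (G d x y j) (G d x y j) = ?c^2 * (Kc x y (j-1) - 1) + (x j)^2 + ?c^2"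
    by (simp add: power2_eq_square)
  have Kp: "Kc x y (j-1) > 0" by (rule Kpos)
  have ks: "Kc x y j = Kc x y (j-1) + (y j)^2 / (x j)^2" using Ksuc[OF assms(1), of x y] by (simp add: power_divide)
  show ?thesis unfolding e ks using Kp assms(3) by (simp add: field_simps power2_eq_square)
qed

lemma normG2:
  shows "dotp (d+1) (G d x y (d+1)) (G d x y (d+1)) = (y (d+1))^2 / Kc x y d"
proof -
  let ?c = "y (d+1) / Kc x y d"
  have "dotp (d+1) (G d x y (d+1)) (G d x y (d+1)) = (\<Sum>i=1..d. G d x y (d+1) i * G d x y (d+1) i) + ?c * ?c"
    unfolding dotp_def by (simp add: sum.cl_ivl_Suc G_def)
  also have "(\<Sum>i=1..d. G d x y (d+1) i * G d x y (d+1) i) = (\<Sum>i\<in>{1..<d+1}. ?c^2 * (y i / x i)^2)"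
    by (rule sum.cong) (auto simp: G_def power_mult_distrib power_divide power2_eq_square mult_ac)
  also have "\<dots> = ?c^2 * (Kc x y d - 1)" using sumsq[of y x "d+1"] by (simp add: sum_distrib_left[symmetric])
  finally show ?thesis using Kpos[of x y d] by (simp add: field_simps power2_eq_square)
qed

lemma muterm:
  assumes "x j \<noteq> 0" "j \<ge> 1"
  shows "(c * y j / ((x j)^2 * Kc x y j)) * (y j / Kc x y (j-1)) = c * (1 / Kc x y (j-1) - 1 / Kc x y j)"
proof -
  have "(c * y j / ((x j)^2 * Kc x y j)) * (y j / Kc x y (j-1)) = c * ((y j)^2 / ((x j)^2 * Kc x y j * Kc x y (j-1)))"
    by (simp add: power2_eq_square)
  also have "\<dots> = c * (1 / Kc x y (j-1) - 1 / Kc x y j)" by (simp only: keyid[of x j y, OF assms])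
  finally show ?thesis .
qed

lemma coordG:
  assumes xnz: "\<forall>j\<in>{1..d}. x j \<noteq> 0" and k: "1 \<le> k" "k \<le> d+1" and i: "1 \<le> i" "i \<le> d+1"
  shows "col d x y k i - (\<Sum>j\<in>{1..<k}. (y k * y j / ((x j)^2 * Kc x y j)) * G d x y j i) = G d x y k i"
proof -
  let ?mu = "\<lambda>j. y k * y j / ((x j)^2 * Kc x y j)"
  let ?g = "\<lambda>j. 1 / Kc x y j"
  have Kk: "Kc x y (k-1) > 0" by (rule Kpos)
  consider "i = d+1" | "i \<le> d" "i < k" | "i \<le> d" "i = k" | "i \<le> d" "k < i" using i by linarith
  then show ?thesis
  proof cases
    case 1
    have "(\<Sum>j\<in>{1..<k}. ?mu j * G d x y j i) = (\<Sum>j\<in>{Suc 0..<Suc (k-1)}. y k * (?g (j-1) - ?g j))"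
    proof (intro sum.cong)
      fix j assume j: "j \<in> {Suc 0..<Suc (k-1)}"
      then have jd: "j \<le> d" "1 \<le> j" using k by auto
      have "?mu j * G d x y j i = ?mu j * (y j / Kc x y (j-1))"
        using jd 1 by (simp add: G_def)
      also have "\<dots> = y k * (?g (j-1) - ?g j)"
        using muterm[of x j "y k" y] xnz jd by simp
      finally show "?mu j * G d x y j i = y k * (?g (j-1) - ?g j)" .
    qed (use k in auto)
    also have "\<dots> = y k * (?g 0 - ?g (k-1))" by (subst sum_distrib_left[symmetric], subst tele, simp_all)
    finally have s: "(\<Sum>j\<in>{1..<k}. ?mu j * G d x y j i) = y k * (1 - 1 / Kc x y (k-1))" by (simp add: K0)
    have "k \<le> d \<or> k = d+1" using k by auto
    then show ?thesis unfolding s using Kk by (auto simp: 1 col_def G_def field_simps)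
  next
    case 2
    have xi: "x i \<noteq> 0" using xnz 2 i by auto
    have "(\<Sum>j\<in>{1..<k}. ?mu j * G d x y j i) = (\<Sum>j\<in>{1..<i}. ?mu j * G d x y j i) + (\<Sum>j\<in>{i..<k}. ?mu j * G d x y j i)"
      using 2 i by (simp add: sum.atLeastLessThan_concat)
    also have "(\<Sum>j\<in>{1..<i}. ?mu j * G d x y j i) = 0"
      by (rule sum.neutral) (use 2 in \<open>auto simp: G_def\<close>)
    also have "(\<Sum>j\<in>{i..<k}. ?mu j * G d x y j i) = ?mu i * x i + (\<Sum>j\<in>{Suc i..<k}. ?mu j * G d x y j i)"
      using 2 by (simp add: sum.atLeast_Suc_lessThan G_def)
    also have "(\<Sum>j\<in>{Suc i..<k}. ?mu j * G d x y j i) = (\<Sum>j\<in>{Suc i..<Suc (k-1)}. (- (y i / x i)) * (y k * (?g (j-1) - ?g j)))"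
    proof (intro sum.cong)
      fix j assume j: "j \<in> {Suc i..<Suc (k-1)}"
      then have jd: "j \<le> d" "1 \<le> j" "i < j" using k by auto
      have "?mu j * G d x y j i = (- (y i / x i)) * (?mu j * (y j / Kc x y (j-1)))"
        using jd by (simp add: G_def mult_ac)
      also have "\<dots> = (- (y i / x i)) * (y k * (?g (j-1) - ?g j))"
        using muterm[of x j "y k" y] xnz jd by simp
      finally show "?mu j * G d x y j i = (- (y i / x i)) * (y k * (?g (j-1) - ?g j))" .
    qed (use k in auto)
    also have "\<dots> = (- (y i / x i)) * (y k * (?g i - ?g (k-1)))"
      using 2 by (subst sum_distrib_left[symmetric], subst sum_distrib_left[symmetric], subst tele, simp_all)
    finally have s: "(\<Sum>j\<in>{1..<k}. ?mu j * G d x y j i) = ?mu i * x i - (y i / x i) * y k * (?g i - ?g (k-1))"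
      by simp
    have c: "col d x y k i = 0" using 2 by (auto simp: col_def)
    have gk: "G d x y k i = - (y k / Kc x y (k - 1)) * (y i / x i)"
    proof (cases "k \<le> d")
      case False then have "k = Suc d" using k by simp
      then show ?thesis using 2 by (simp add: G_def)
    qed (use 2 in \<open>simp add: G_def\<close>)
    have Ki: "Kc x y i > 0" by (rule Kpos)
    show ?thesis unfolding s c gk using xi Ki Kk by (simp add: field_simps power2_eq_square)
  next
    case 3
    have s: "(\<Sum>j\<in>{1..<k}. ?mu j * G d x y j i) = 0"
      by (rule sum.neutral) (use 3 in \<open>auto simp: G_def\<close>)
    show ?thesis unfolding s using 3 by (simp add: col_def G_def)
  next
    case 4
    have s: "(\<Sum>j\<in>{1..<k}. ?mu j * G d x y j i) = 0"
      by (rule sum.neutral) (use 4 in \<open>auto simp: G_def\<close>)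
    show ?thesis unfolding s using 4 by (simp add: col_def G_def)
  qed
qed

declare gso.simps[simp del]

lemma gsoG:
  assumes xnz: "\<forall>j\<in>{1..d}. x j \<noteq> 0"
  shows "1 \<le> k \<Longrightarrow> k \<le> d+1 \<Longrightarrow> \<forall>i\<in>{1..d+1}. gso (d+1) (col d x y) k i = G d x y k i"
proof (induction k rule: less_induct)
  case (less k)
  have IH: "\<And>j i. j \<in> {1..<k} \<Longrightarrow> i \<in> {1..d+1} \<Longrightarrow> gso (d+1) (col d x y) j i = G d x y j i"
    using less by auto
  have mu: "dotp (d+1) (col d x y k) (gso (d+1) (col d x y) j) / dotp (d+1) (gso (d+1) (col d x y) j) (gso (d+1) (col d x y) j)
      = y k * y j / ((x j)^2 * Kc x y j)" if j: "j \<in> {1..<k}" for j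
  proof -
    have e1: "dotp (d+1) (col d x y k) (gso (d+1) (col d x y) j) = dotp (d+1) (col d x y k) (G d x y j)"
      unfolding dotp_def by (rule sum.cong) (use IH j in auto)
    have e2: "dotp (d+1) (gso (d+1) (col d x y) j) (gso (d+1) (col d x y) j) = dotp (d+1) (G d x y j) (G d x y j)"
      unfolding dotp_def by (rule sum.cong) (use IH j in auto)
    have jd: "1 \<le> j" "j \<le> d" "j < k" using j less by auto
    have xj: "x j \<noteq> 0" using xnz jd by auto
    have K1: "Kc x y j > 0" "Kc x y (j-1) > 0" by (rule Kpos)+
    show ?thesis unfolding e1 e2 dotG[of j k d x y, OF jd(1,3) less(3)] normG1[of j d x y, OF jd(1,2) xj]
      using xj K1 by (simp add: field_simps power2_eq_square)
  qed
  show ?case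
  proof
    fix i assume i: "i \<in> {1..d+1}"
    have "gso (d+1) (col d x y) k i = col d x y k i - (\<Sum>j\<in>{1..<k}.
       (dotp (d+1) (col d x y k) (gso (d+1) (col d x y) j) / dotp (d+1) (gso (d+1) (col d x y) j) (gso (d+1) (col d x y) j)) * gso (d+1) (col d x y) j i)"
      by (subst gso.simps) (rule refl)
    also have "(\<Sum>j\<in>{1..<k}.
       (dotp (d+1) (col d x y k) (gso (d+1) (col d x y) j) / dotp (d+1) (gso (d+1) (col d x y) j) (gso (d+1) (col d x y) j)) * gso (d+1) (col d x y) j i)
      = (\<Sum>j\<in>{1..<k}. (y k * y j / ((x j)^2 * Kc x y j)) * G d x y j i)"
      by (rule sum.cong) (use mu IH i in auto)
    also have "col d x y k i - \<dots> = G d x y k i"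
      by (rule coordG) (use xnz less i in auto)
    finally show "gso (d+1) (col d x y) k i = G d x y k i" .
  qed
qed

theorem lemma4:
  fixes d :: nat and x y :: "nat \<Rightarrow> real"
  assumes "d \<ge> 1"
    and "det (colmat d x y) \<noteq> 0"
  shows "(\<forall>k\<in>{1..d}. \<forall>i\<in>{1..d+1}.
            gso (d+1) (col d x y) k i =
              (if i < k then - (y k / Kc x y (k - 1)) * (y i / x i)
               else if i = k then x k
               else if i < d + 1 then 0
               else y k / Kc x y (k - 1)))
       \<and> (\<forall>i\<in>{1..d}. gso (d+1) (col d x y) (d+1) i = - (y (d+1) / Kc x y d) * (y i / x i))
       \<and> gso (d+1) (col d x y) (d+1) (d+1) = y (d+1) / Kc x y d
       \<and> (\<forall>k\<in>{1..d}. dotp (d+1) (gso (d+1) (col d x y) k) (gso (d+1) (col d x y) k)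
                        = (x k)^2 * (Kc x y k / Kc x y (k - 1)))
       \<and> dotp (d+1) (gso (d+1) (col d x y) (d+1)) (gso (d+1) (col d x y) (d+1))
            = (y (d+1))^2 / Kc x y d
       \<and> (\<forall>k\<in>{1..d+1}. \<forall>j\<in>{1..<k}.
            gs_mu (d+1) (col d x y) k j = y k * y j / ((x j)^2 * Kc x y j))"
proof -
  have xz: "\<forall>j\<in>{1..d}. x j \<noteq> 0" using xnz[OF assms(2)] by blast
  note g = gsoG[OF xz]
  have eqd: "\<And>j. 1 \<le> j \<Longrightarrow> j \<le> d+1 \<Longrightarrow>
      dotp (d+1) (gso (d+1) (col d x y) j) (gso (d+1) (col d x y) j) = dotp (d+1) (G d x y j) (G d x y j)"
    unfolding dotp_def by (rule sum.cong) (use g in auto)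
  have eqc: "\<And>j k. 1 \<le> j \<Longrightarrow> j \<le> d+1 \<Longrightarrow>
      dotp (d+1) (col d x y k) (gso (d+1) (col d x y) j) = dotp (d+1) (col d x y k) (G d x y j)"
    unfolding dotp_def by (rule sum.cong) (use g in auto)
  have P1: "\<forall>k\<in>{1..d}. \<forall>i\<in>{1..d+1}.
            gso (d+1) (col d x y) k i =
              (if i < k then - (y k / Kc x y (k - 1)) * (y i / x i)
               else if i = k then x k
               else if i < d + 1 then 0
               else y k / Kc x y (k - 1))"
  proof (intro ballI)
    fix k i assume k: "k \<in> {1..d}" and i: "i \<in> {1..d+1}"
    have "gso (d+1) (col d x y) k i = G d x y k i" using g[of k] k i by auto
    then show "gso (d+1) (col d x y) k i =
              (if i < k then - (y k / Kc x y (k - 1)) * (y i / x i)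
               else if i = k then x k
               else if i < d + 1 then 0
               else y k / Kc x y (k - 1))" using k by (simp add: G_def)
  qed
  have P2: "\<forall>i\<in>{1..d}. gso (d+1) (col d x y) (d+1) i = - (y (d+1) / Kc x y d) * (y i / x i)"
  proof
    fix i assume i: "i \<in> {1..d}"
    have "gso (d+1) (col d x y) (d+1) i = G d x y (d+1) i" using g[of "d+1"] i by auto
    then show "gso (d+1) (col d x y) (d+1) i = - (y (d+1) / Kc x y d) * (y i / x i)" using i by (simp add: G_def)
  qed
  have P3: "gso (d+1) (col d x y) (d+1) (d+1) = y (d+1) / Kc x y d"
    using g[of "d+1"] by (simp add: G_def)
  have P4: "\<forall>k\<in>{1..d}. dotp (d+1) (gso (d+1) (col d x y) k) (gso (d+1) (col d x y) k)
                        = (x k)^2 * (Kc x y k / Kc x y (k - 1))"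
    using eqd normG1 xz by auto
  have P5: "dotp (d+1) (gso (d+1) (col d x y) (d+1)) (gso (d+1) (col d x y) (d+1))
            = (y (d+1))^2 / Kc x y d"
    using eqd[of "d+1"] normG2[of d x y] by simp
  have P6: "\<forall>k\<in>{1..d+1}. \<forall>j\<in>{1..<k}.
            gs_mu (d+1) (col d x y) k j = y k * y j / ((x j)^2 * Kc x y j)"
  proof (intro ballI)
    fix k j assume k: "k \<in> {1..d+1}" and j: "j \<in> {1..<k}"
    have jd: "1 \<le> j" "j \<le> d" "j < k" "k \<le> d+1" using j k by auto
    have xj: "x j \<noteq> 0" using xz jd by auto
    have K1: "Kc x y j > 0" "Kc x y (j-1) > 0" by (rule Kpos)+
    show "gs_mu (d+1) (col d x y) k j = y k * y j / ((x j)^2 * Kc x y j)"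
    proof -
      have a: "dotp (d+1) (col d x y k) (gso (d+1) (col d x y) j) = y k * y j / Kc x y (j-1)"
        using eqc[of j k] jd dotG[of j k d x y, OF jd(1,3,4)] by simp
      have b: "dotp (d+1) (gso (d+1) (col d x y) j) (gso (d+1) (col d x y) j) = (x j)^2 * (Kc x y j / Kc x y (j-1))"
        using eqd[of j] jd normG1[of j d x y, OF jd(1,2) xj] by simp
      show ?thesis unfolding gs_mu_def a b using xj K1
        by (simp add: field_simps power2_eq_square)
    qed
  qed
  show ?thesis using P1 P2 P3 P4 P5 P6 by blast
qed

end
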